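(* Let $\mathcal{H}$ be a $d$-dimensional Hilbert space, let $\mathcal{A}$ be an observable on $\mathcal{H}$ with orthonormal eigenbasis $\{|k\rangle\}_{k=0}^{d-1}$, and let $\rho_t$ be a family of density operators on $\mathcal{H}$ evolving under an arbitrary dynamics (in the Schrödinger picture) such that $\sqrt{\rho_t}$ is differentiable in $t$. Then for every $T>0$, the time needed to go from coherence $C(\rho_0,\mathcal{A})$ to $C(\rho_T,\mathcal{A})$ satisfies $$T\ \geq\ T_C=\frac{\sqrt{2}\,\bigl|\sqrt{C(\rho_0,\mathcal{A})}-\sqrt{C(\rho_T,\mathcal{A})}\bigr|}{\Bigl\langle\!\Bigl\langle \sqrt{\sum_{k=0}^{d-1}\lVert[\partial_t\sqrt{\rho_t},|k\rangle\langle k|]\rVert_{\rm HS}^2}\Bigr\rangle\!\Bigr\rangle_T}$$ (whenever the time average in the denominator is nonzero).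
   Context: The skew-information-based coherence of a state $\rho$ in the eigenbasis $\{|k\rangle\}$ of $\mathcal{A}$ is $C(\rho,\mathcal{A})=\sum_{k=0}^{d-1}I(\rho,|k\rangle\langle k|)=\frac12\sum_{k}\lVert[\sqrt{\rho},|k\rangle\langle k|]\rVert_{\rm HS}^2$, where $I(\rho,X)=\frac12\lVert[\sqrt\rho,X]\rVert_{\rm HS}^2$ is the skew information, $[X,Y]=XY-YX$, and $\lVert O\rVert_{\rm HS}=\sqrt{\operatorname{tr}(O^\dagger O)}$. For a function $X_t$, $\langle\!\langle X_t\rangle\!\rangle_T=\frac{1}{T}\int_0^T X_t\,dt$. *)

theory Defs
  imports "HOL-Analysis.Analysis"
begin

text \<open>Operators on a d-dimensional Hilbert space are modelled as complex matrices
  indexed by a finite type 'n (d = CARD('n)), vectors as complex^'n.\<close>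

definition cinner :: "complex^'n \<Rightarrow> complex^'n \<Rightarrow> complex" where
  "cinner u v = (\<Sum>i\<in>UNIV. cnj (u $ i) * v $ i)"

definition adj :: "complex^'n^'n \<Rightarrow> complex^'n^'n" where
  "adj A = (\<chi> i j. cnj (A $ j $ i))"

definition hermitian :: "complex^'n^'n \<Rightarrow> bool" where
  "hermitian A \<longleftrightarrow> adj A = A"

definition psd :: "complex^'n^'n \<Rightarrow> bool" where
  "psd A \<longleftrightarrow> hermitian A \<and> (\<forall>v. 0 \<le> Re (cinner v (A *v v)))"

definition density_op :: "complex^'n^'n \<Rightarrow> bool" where
  "density_op A \<longleftrightarrow> psd A \<and> trace A = 1"

definition matrix_sqrt :: "complex^'n^'n \<Rightarrow> complex^'n^'n" where
  "matrix_sqrt A = (THE B. psd B \<and> B ** B = A)"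

definition commutator :: "complex^'n^'n \<Rightarrow> complex^'n^'n \<Rightarrow> complex^'n^'n" where
  "commutator X Y = X ** Y - Y ** X"

definition hs_norm :: "complex^'n^'n \<Rightarrow> real" where
  "hs_norm O' = sqrt (Re (trace (adj O' ** O')))"

definition proj :: "complex^'n \<Rightarrow> complex^'n^'n" where
  "proj v = (\<chi> i j. v $ i * cnj (v $ j))"

definition skew_info :: "complex^'n^'n \<Rightarrow> complex^'n^'n \<Rightarrow> real" where
  "skew_info \<rho> X = 1/2 * (hs_norm (commutator (matrix_sqrt \<rho>) X))\<^sup>2"

definition coherence :: "complex^'n^'n \<Rightarrow> ('n \<Rightarrow> complex^'n) \<Rightarrow> real" where
  "coherence \<rho> e = (\<Sum>k\<in>UNIV. skew_info \<rho> (proj (e k)))"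

definition orthonormal_basis :: "('n \<Rightarrow> complex^'n) \<Rightarrow> bool" where
  "orthonormal_basis e \<longleftrightarrow> (\<forall>j k. cinner (e j) (e k) = (if j = k then 1 else 0))"

definition eigenbasis_of :: "complex^'n^'n \<Rightarrow> ('n \<Rightarrow> complex^'n) \<Rightarrow> bool" where
  "eigenbasis_of A e \<longleftrightarrow> orthonormal_basis e \<and> (\<forall>k. \<exists>c. A *v e k = c *s e k)"

end

theory Submission
  imports Defs
begin

lemma re_cnj_mult: "Re (cnj z * z) = (cmod z)\<^sup>2"
  by (metis Re_complex_of_real complex_norm_square mult.commute)

lemma cm: "cmod z * cmod z = Re z * Re z + Im z * Im z"
  by (metis cmod_power2 power2_eq_square)

lemma hs_norm_eq_norm: "hs_norm (M::complex^'n^'n) = norm M"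
proof -
  have "Re (trace (adj M ** M)) = (\<Sum>i\<in>UNIV. \<Sum>j\<in>UNIV. (cmod (M$j$i))\<^sup>2)"
    by (simp add: trace_def adj_def matrix_matrix_mult_def Re_sum) (simp add: power2_eq_square cm)
  also have "\<dots> = (\<Sum>j\<in>UNIV. \<Sum>i\<in>UNIV. (cmod (M$j$i))\<^sup>2)" by (rule sum.swap)
  also have "\<dots> = (\<Sum>j\<in>UNIV. (norm (M$j))\<^sup>2)"
    by (simp add: norm_vec_def L2_set_def sum_nonneg)
  finally show ?thesis by (simp add: hs_norm_def norm_vec_def L2_set_def)
qed

lemma lin: "bounded_linear (\<lambda>M::complex^'n^'n. \<chi> k. commutator M (proj (e k)))"
proof -
  have "linear (\<lambda>M::complex^'n^'n. \<chi> k. commutator M (proj (e k)))"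
    by (rule linearI) (auto simp: commutator_def 
       vec_eq_iff matrix_matrix_mult_def sum_distrib_left sum.distrib algebra_simps
       scaleR_sum_right)
  then show ?thesis by (simp add: linear_conv_bounded_linear)
qed

theorem theorem2:
  fixes \<A> :: "complex^'n^'n" and e :: "'n \<Rightarrow> complex^'n"
    and \<rho> :: "real \<Rightarrow> complex^'n^'n" and T :: real
  assumes obs: "hermitian \<A>"
    and eig: "eigenbasis_of \<A> e"
    and dens: "\<forall>t. density_op (\<rho> t)"
    and T_pos: "T > 0"
    and diff: "\<forall>t\<in>{0..T}. (\<lambda>s. matrix_sqrt (\<rho> s)) differentiable (at t within {0..T})"
    and integ: "(\<lambda>t. sqrt (\<Sum>k\<in>UNIV. (hs_norm (commutator
                   (vector_derivative (\<lambda>s. matrix_sqrt (\<rho> s)) (at t within {0..T}))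
                   (proj (e k))))\<^sup>2)) integrable_on {0..T}"
    and nonzero: "(1 / T) * integral {0..T} (\<lambda>t. sqrt (\<Sum>k\<in>UNIV. (hs_norm (commutator
                   (vector_derivative (\<lambda>s. matrix_sqrt (\<rho> s)) (at t within {0..T}))
                   (proj (e k))))\<^sup>2)) \<noteq> 0"
  shows "T \<ge> sqrt 2 * \<bar>sqrt (coherence (\<rho> 0) e) - sqrt (coherence (\<rho> T) e)\<bar>
           / ((1 / T) * integral {0..T} (\<lambda>t. sqrt (\<Sum>k\<in>UNIV. (hs_norm (commutator
                   (vector_derivative (\<lambda>s. matrix_sqrt (\<rho> s)) (at t within {0..T}))
                   (proj (e k))))\<^sup>2)))"
proof -
  define L where "L = (\<lambda>M::complex^'n^'n. \<chi> k. commutator M (proj (e k)))"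
  define S where "S = (\<lambda>s. matrix_sqrt (\<rho> s))"
  define S' where "S' = (\<lambda>t. vector_derivative S (at t within {0..T}))"
  define G where "G = (\<lambda>t. sqrt (\<Sum>k\<in>UNIV. (hs_norm (commutator (S' t) (proj (e k))))\<^sup>2))"
  define I where "I = integral {0..T} G"
  have bl: "bounded_linear L" unfolding L_def by (rule lin)
  have nL: "norm (L M) = sqrt (\<Sum>k\<in>UNIV. (hs_norm (commutator M (proj (e k))))\<^sup>2)" for M
    by (simp add: L_def norm_vec_def L2_set_def hs_norm_eq_norm)
  have G_eq: "G t = norm (L (S' t))" for t by (simp add: G_def nL)
  have coh: "sqrt 2 * sqrt (coherence (\<rho> t) e) = norm (L (S t))" for t
  proof -
    have "coherence (\<rho> t) e = (\<Sum>k\<in>UNIV. (hs_norm (commutator (S t) (proj (e k))))\<^sup>2) / 2"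
      by (simp add: coherence_def skew_info_def S_def sum_divide_distrib)
    then show ?thesis by (simp add: nL real_sqrt_divide flip: real_sqrt_mult)
  qed
  have der: "((\<lambda>t. L (S t)) has_vector_derivative L (S' t)) (at t within {0..T})"
    if "t \<in> {0..T}" for t
    using bounded_linear.has_vector_derivative[OF bl] diff that
    unfolding S'_def S_def by (simp add: vector_derivative_works)
  have ftc: "((\<lambda>t. L (S' t)) has_integral (L (S T) - L (S 0))) {0..T}"
    using fundamental_theorem_of_calculus[of 0 T "\<lambda>t. L (S t)" "\<lambda>t. L (S' t)"] T_pos der by simp
  have Gi: "G integrable_on {0..T}" using integ unfolding G_def S'_def S_def .
  have A1: "norm (L (S T) - L (S 0)) \<le> I"
    using integral_norm_bound_integral[of "\<lambda>t. L (S' t)" "{0..T}" G] ftc Gi G_eq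
    unfolding I_def by (auto simp: has_integral_integrable_integral)
  have A2: "\<bar>norm (L (S 0)) - norm (L (S T))\<bar> \<le> norm (L (S T) - L (S 0))"
    by (metis norm_minus_commute norm_triangle_ineq3)
  have X: "sqrt 2 * \<bar>sqrt (coherence (\<rho> 0) e) - sqrt (coherence (\<rho> T) e)\<bar> \<le> I"
  proof -
    have "sqrt 2 * \<bar>sqrt (coherence (\<rho> 0) e) - sqrt (coherence (\<rho> T) e)\<bar>
        = \<bar>sqrt 2 * sqrt (coherence (\<rho> 0) e) - sqrt 2 * sqrt (coherence (\<rho> T) e)\<bar>"
      by (subst right_diff_distrib[symmetric]) (simp add: abs_mult)
    also have "\<dots> = \<bar>norm (L (S 0)) - norm (L (S T))\<bar>" by (simp only: coh)
    finally show ?thesis using A1 A2 by linarith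
  qed
  have "I \<ge> 0" unfolding I_def using Gi by (intro integral_nonneg) (auto simp: G_def sum_nonneg)
  moreover have "I \<noteq> 0" using nonzero T_pos unfolding I_def G_def S'_def S_def by simp
  ultimately have Ipos: "I > 0" by simp
  have "sqrt 2 * \<bar>sqrt (coherence (\<rho> 0) e) - sqrt (coherence (\<rho> T) e)\<bar> / ((1/T) * I) \<le> I / ((1/T) * I)"
    using X Ipos T_pos by (intro divide_right_mono) auto
  also have "\<dots> = T" using Ipos T_pos by simp
  finally show ?thesis unfolding I_def G_def S'_def S_def .
qed

end
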